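(* Let $V, W$ be real Banach spaces and let $T$ be a bijective bounded linear operator on $V$ with $T^k = I$ for some integer $k \ge 1$. Let $f: [0,\infty) \times V \to V$ satisfy, for some $\Delta t > 0$, $$f(t, Tu) = T f(t + \Delta t, u) \quad \text{for all } u \in V,\ t \ge 0.$$ Suppose there is $\Theta \in GL(V,W)$ and $\lambda < 0$ with $M^\Theta(f_t) \le \lambda$ for all $t \ge 0$. Then for every solution $u$ of $\dot u = f(t,u)$ there is a $k\Delta t$-periodic function $p: [0,\infty) \to V$ with $\|u(t) - p(t)\| \to 0$ as $t \to \infty$; namely $p(t) = \lim_{n \to \infty} u(t + nk\Delta t)$, and this limit exists for every $t \ge 0$.
   Context: For a real Banach space $X$, the right semi-inner product is $(a,b)_+ := \|a\| \lim_{h \to 0^+} \frac{\|a + hb\| - \|a\|}{h}$. For $\Theta \in GL(V,W)$ (a bijective bounded linear operator) and $g: V \to V$, $M^\Theta(g) := \sup_{u \ne v \in V} \frac{(\Theta(u-v), \Theta(g(u) - g(v)))_+}{\|\Theta(u-v)\|_W^2}$. We write $f_t = f(t,\cdot)$. Solutions are continuously differentiable curves $[0,\infty) \to V$ satisfying the equation for all $t \ge 0$. *)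

theory Defs
  imports "HOL-Analysis.Analysis"
begin

definition semi_inner_plus :: "'a::real_normed_vector \<Rightarrow> 'a \<Rightarrow> real" where
  "semi_inner_plus a b = norm a * Lim (at_right 0) (\<lambda>h::real. (norm (a + h *\<^sub>R b) - norm a) / h)"

text \<open>Logarithmic Lipschitz constant M^Theta(g), as an extended real supremum
  (so that an unbounded set of quotients gives +infinity).\<close>
definition M_Theta :: "('v::real_normed_vector \<Rightarrow> 'w::real_normed_vector) \<Rightarrow> ('v \<Rightarrow> 'v) \<Rightarrow> ereal" where
  "M_Theta \<Theta> g = (SUP (u, v) \<in> {(u, v). u \<noteq> v}.
      ereal (semi_inner_plus (\<Theta> (u - v)) (\<Theta> (g u - g v)) / (norm (\<Theta> (u - v)))\<^sup>2))"

end

theory Submission imports Defs begin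


lemma norm_quot_mono:
  fixes a b :: "'a::real_normed_vector"
  assumes "0<h" "h\<le>h'"
  shows "(norm(a+h*\<^sub>R b) - norm a)/h \<le> (norm(a + h'*\<^sub>R b) - norm a)/h'"
proof -
  have hp: "0 < h'" using assms by simp
  define c where "c = h/h'"
  have c: "0 < c" "c \<le> 1" using assms hp by (auto simp: c_def field_simps)
  have eq: "a + h*\<^sub>R b = (1 - c) *\<^sub>R a + c *\<^sub>R (a + h' *\<^sub>R b)"
    using hp by (simp add: c_def algebra_simps)
  have "norm (a + h*\<^sub>R b) \<le> (1-c) * norm a + c * norm (a + h' *\<^sub>R b)"
    unfolding eq using c norm_triangle_ineq[of "(1 - c) *\<^sub>R a" "c *\<^sub>R (a + h' *\<^sub>R b)"]
    by simp
  hence "norm (a + h*\<^sub>R b) - norm a \<le> c * (norm (a + h' *\<^sub>R b) - norm a)"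
    by (simp add: algebra_simps)
  thus ?thesis using assms hp by (simp add: c_def field_simps)
qed

lemma semi_quot_tendsto:
  fixes a b :: "'a::real_normed_vector"
  defines "q \<equiv> (\<lambda>h::real. (norm(a+h*\<^sub>R b) - norm a)/h)"
  shows "(q \<longlongrightarrow> Lim (at_right 0) q) (at_right 0)"
proof -
  define L where "L = Inf (q ` {0<..})"
  have lb: "- norm b \<le> q h" if "h > 0" for h
  proof -
    have "norm a \<le> norm (a + h*\<^sub>R b) + norm (h *\<^sub>R b)"
      by (metis add_diff_cancel norm_triangle_ineq4)
    hence "- (h * norm b) \<le> norm(a+h*\<^sub>R b) - norm a" using that by simp
    thus ?thesis using that by (simp add: q_def field_simps)
  qed
  have bdd: "bdd_below (q ` {0<..})" using lb by (auto intro!: bdd_belowI[where m="- norm b"])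
  have Lle: "L \<le> q h" if "h>0" for h unfolding L_def using bdd that by (auto intro: cInf_lower)
  have "(q \<longlongrightarrow> L) (at_right 0)"
  proof (rule order_tendstoI)
    fix y assume "y < L"
    have "\<forall>h>0. y < q h" using Lle \<open>y < L\<close> by (meson order.strict_trans2)
    thus "eventually (\<lambda>h. y < q h) (at_right 0)"
      unfolding eventually_at_right_field by (meson zero_less_one)
  next
    fix y assume "L < y"
    have ne: "q ` {0<..} \<noteq> {}" by auto
    obtain z where z: "z \<in> q ` {0<..}" "z < y"
      using cInf_lessD[OF ne, of y] \<open>L < y\<close> unfolding L_def by blast
    then obtain h0 where h0: "h0 > 0" "q h0 < y" by auto
    have "q h < y" if "0 < h" "h < h0" for h
      using norm_quot_mono[of h h0 a b] that h0 unfolding q_def by linarith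
    thus "eventually (\<lambda>h. q h < y) (at_right 0)"
      using h0 by (auto simp: eventually_at_right_field)
  qed
  moreover have "Lim (at_right 0) q = L"
    using calculation by (intro tendsto_Lim) (simp_all add: trivial_limit_at_right_real)
  ultimately show ?thesis by simp
qed



lemma dini_le:
  fixes g :: "real \<Rightarrow> real"
  assumes ab: "a \<le> b" and cont: "continuous_on {a..b} g"
    and loc: "\<And>t \<epsilon>. t \<in> {a..<b} \<Longrightarrow> \<epsilon> > 0 \<Longrightarrow> eventually (\<lambda>h. g (t+h) \<le> g t + \<epsilon>*h) (at_right 0)"
  shows "g b \<le> g a"
proof -
  have main: "g b \<le> g a + \<epsilon> * (b - a)" if eps: "\<epsilon> > 0" for \<epsilon>
  proof -
    define S where "S = {a..b} \<inter> (\<lambda>s. g s - \<epsilon> * (s - a)) -` {..g a}"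
    have cont2: "continuous_on {a..b} (\<lambda>s. g s - \<epsilon> * (s - a))"
      by (intro continuous_intros cont)
    have clS: "closed S" unfolding S_def
      by (rule continuous_closed_preimage[OF cont2]) auto
    have aS: "a \<in> S" using ab by (simp add: S_def)
    have Ssub: "S \<subseteq> {a..b}" by (auto simp: S_def)
    have bddS: "bdd_above S" using Ssub by (meson bdd_above_Icc bdd_above_mono)
    define c where "c = Sup S"
    have cS: "c \<in> S" unfolding c_def using closed_contains_Sup[OF _ bddS clS] aS by blast
    have cb: "c = b"
    proof (rule ccontr)
      assume "c \<noteq> b"
      with cS Ssub have cab: "c \<in> {a..<b}" by auto
      from loc[OF cab eps] obtain d where d: "d > 0" "\<And>h. 0 < h \<Longrightarrow> h < d \<Longrightarrow> g (c+h) \<le> g c + \<epsilon>*h"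
        unfolding eventually_at_right_field by auto
      define m where "m = min d (b - c)"
      have mm: "m \<le> b - c" "m \<le> d" "0 < m" using d cab by (auto simp: m_def)
      define h where "h = m / 2"
      have h: "0 < h" "h < d" "c + h \<le> b" using mm h_def by linarith+
      have "g (c+h) \<le> g c + \<epsilon>*h" using d h by auto
      also have "\<dots> \<le> g a + \<epsilon> * (c - a) + \<epsilon> * h" using cS by (simp add: S_def)
      finally have "c + h \<in> S" using h cab by (simp add: S_def algebra_simps)
      hence "c + h \<le> c" unfolding c_def using bddS by (rule cSup_upper)
      thus False using h by simp
    qed
    show ?thesis using cS cb by (simp add: S_def)
  qed
  show ?thesis
  proof (cases "a = b")
    case True thus ?thesis by simp
  next
    case False
    hence ba: "b - a > 0" using ab by simp
    show ?thesis
    proof (rule field_le_epsilon)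
      fix e :: real assume "e > 0"
      have "g b \<le> g a + (e / (b-a)) * (b - a)" using main[of "e/(b-a)"] \<open>e>0\<close> ba by simp
      thus "g b \<le> g a + e" using ba by simp
    qed
  qed
qed

lemma gronwall_dini:
  fixes \<phi> :: "real \<Rightarrow> real"
  assumes cont: "continuous_on {0..} \<phi>"
    and loc: "\<And>t \<epsilon>. t \<ge> 0 \<Longrightarrow> \<epsilon> > 0 \<Longrightarrow>
        eventually (\<lambda>h. \<phi> (t+h) \<le> \<phi> t + h * (lam * \<phi> t + \<epsilon>)) (at_right 0)"
    and t: "t \<ge> 0"
  shows "\<phi> t \<le> exp (lam * t) * \<phi> 0"
proof -
  define \<psi> where "\<psi> s = exp (- lam * s) * \<phi> s" for s
  have "\<psi> t \<le> \<psi> 0"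
  proof (rule dini_le[OF t])
    show "continuous_on {0..t} \<psi>" unfolding \<psi>_def
      by (intro continuous_intros continuous_on_subset[OF cont]) auto
  next
    fix s \<epsilon> :: real assume s: "s \<in> {0..<t}" and eps: "\<epsilon> > 0"
    define E where "E = exp (- lam * s)"
    have E: "E > 0" by (simp add: E_def)
    define \<epsilon>' where "\<epsilon>' = \<epsilon> / (2 * E)"
    have eps': "\<epsilon>' > 0" using eps E by (simp add: \<epsilon>'_def)
    have ev1: "eventually (\<lambda>h. \<phi> (s+h) \<le> \<phi> s + h * (lam * \<phi> s + \<epsilon>')) (at_right 0)"
      using loc[of s \<epsilon>'] s eps' by auto
    define R where "R h = \<phi> s * ((exp (- lam * (s+h)) - E) / h) + exp (- lam * (s+h)) * (lam * \<phi> s + \<epsilon>')" for h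
    have D: "DERIV (\<lambda>x. exp (- lam * x)) s :> exp (- lam * s) * (- lam)"
      by (auto intro!: derivative_eq_intros)
    have lim1: "((\<lambda>h. (exp (- lam * (s+h)) - E) / h) \<longlongrightarrow> exp (- lam * s) * (- lam)) (at_right 0)"
      using D unfolding DERIV_def E_def by (rule tendsto_mono[OF at_le, rotated]) simp
    have lim2: "((\<lambda>h. exp (- lam * (s+h))) \<longlongrightarrow> E) (at_right 0)"
    proof -
      have "((\<lambda>h. exp (- lam * (s+h))) \<longlongrightarrow> exp (- lam * (s+0))) (at_right 0)"
        by (intro tendsto_intros)
      thus ?thesis by (simp add: E_def)
    qed
    have limR: "(R \<longlongrightarrow> \<phi> s * (E * (- lam)) + E * (lam * \<phi> s + \<epsilon>')) (at_right 0)"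
      unfolding R_def using lim1 lim2 unfolding E_def[symmetric] by (intro tendsto_intros)
    have "\<phi> s * (E * (- lam)) + E * (lam * \<phi> s + \<epsilon>') = \<epsilon> / 2"
      using E by (simp add: \<epsilon>'_def algebra_simps)
    with limR have "(R \<longlongrightarrow> \<epsilon>/2) (at_right 0)" by metis
    hence "eventually (\<lambda>h. R h < \<epsilon>) (at_right 0)"
      by (rule order_tendstoD(2)) (use eps in simp)
    moreover have "eventually (\<lambda>h. h > 0) (at_right (0::real))" by (simp add: eventually_at_right_less)
    ultimately show "eventually (\<lambda>h. \<psi> (s+h) \<le> \<psi> s + \<epsilon>*h) (at_right 0)"
      using ev1
    proof eventually_elim
      case (elim h)
      have ex: "exp (- lam * (s+h)) > 0" by simp
      have "\<psi> (s+h) \<le> exp (- lam * (s+h)) * (\<phi> s + h * (lam * \<phi> s + \<epsilon>'))"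
        unfolding \<psi>_def using elim(3) ex by (simp add: mult_left_mono)
      also have "\<dots> = E * \<phi> s + h * R h"
        using elim(2) by (simp add: R_def field_simps)
      also have "\<dots> \<le> E * \<phi> s + h * \<epsilon>"
        using elim(1,2) by (intro add_left_mono mult_left_mono) auto
      finally show ?case by (simp add: \<psi>_def E_def mult.commute)
    qed
  qed
  thus ?thesis
    by (simp add: \<psi>_def exp_minus field_simps)
qed




lemma contraction:
  fixes \<Theta> :: "'v::real_normed_vector \<Rightarrow> 'w::real_normed_vector" and f :: "real \<Rightarrow> 'v \<Rightarrow> 'v"
  assumes lin: "bounded_linear \<Theta>" and inj: "inj \<Theta>"
    and M: "\<And>t. t \<ge> 0 \<Longrightarrow> M_Theta \<Theta> (f t) \<le> ereal lam"
    and dx: "\<And>t. t \<ge> 0 \<Longrightarrow> (x has_vector_derivative f t (x t)) (at t within {0..})"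
    and dy: "\<And>t. t \<ge> 0 \<Longrightarrow> (y has_vector_derivative f t (y t)) (at t within {0..})"
    and t: "t \<ge> 0"
  shows "norm (\<Theta> (x t - y t)) \<le> exp (lam * t) * norm (\<Theta> (x 0 - y 0))"
proof -
  interpret L: bounded_linear \<Theta> by (rule lin)
  define w where "w s = \<Theta> (x s - y s)" for s
  define \<phi> where "\<phi> s = norm (w s)" for s
  have dw: "(w has_vector_derivative \<Theta> (f s (x s) - f s (y s))) (at s within {0..})" if "s \<ge> 0" for s
    unfolding w_def by (rule L.has_vector_derivative[OF has_vector_derivative_diff[OF dx[OF that] dy[OF that]]])
  have cont: "continuous_on {0..} \<phi>"
    unfolding continuous_on_eq_continuous_within \<phi>_def
    using continuous_norm[OF has_vector_derivative_continuous[OF dw]] by auto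
  have "\<phi> t \<le> exp (lam * t) * \<phi> 0"
  proof (rule gronwall_dini[OF cont _ t])
    fix s \<epsilon> :: real assume s: "s \<ge> 0" and eps: "\<epsilon> > 0"
    define a where "a = w s"
    define b where "b = \<Theta> (f s (x s) - f s (y s))"
    define q where "q = (\<lambda>h::real. (norm(a+h*\<^sub>R b) - norm a)/h)"
    define L where "L = Lim (at_right 0) q"
    have qL: "(q \<longlongrightarrow> L) (at_right 0)" unfolding L_def q_def by (rule semi_quot_tendsto)
    have Lb: "L \<le> lam * norm a"
    proof (cases "x s = y s")
      case True
      hence "a = 0" "b = 0" by (simp_all add: a_def b_def w_def L.zero L.diff)
      hence "q = (\<lambda>h. 0)" by (simp add: q_def fun_eq_iff)
      hence "L = 0" using qL by (metis tendsto_const tendsto_unique trivial_limit_at_right_real)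
      thus ?thesis using \<open>a = 0\<close> by simp
    next
      case False
      have "x s - y s \<noteq> 0" using False by simp
      hence "a \<noteq> 0" using inj L.zero unfolding a_def w_def by (metis injD)
      hence na: "norm a > 0" by simp
      have "ereal (semi_inner_plus a b / (norm a)\<^sup>2) \<le> M_Theta \<Theta> (f s)"
        unfolding M_Theta_def a_def b_def w_def
        by (rule SUP_upper2[where i="(x s, y s)"]) (use False in auto)
      also have "\<dots> \<le> ereal lam" using M s by simp
      finally have "semi_inner_plus a b / (norm a)\<^sup>2 \<le> lam" by simp
      moreover have "semi_inner_plus a b = norm a * L"
        unfolding semi_inner_plus_def L_def q_def ..
      ultimately have "norm a * L / (norm a)\<^sup>2 \<le> lam" by simp
      hence "L / norm a \<le> lam" using na by (simp add: power2_eq_square)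
      thus ?thesis using na by (simp add: divide_le_eq mult.commute)
    qed
    have ev1: "eventually (\<lambda>h. q h < L + \<epsilon>/2) (at_right 0)"
      using qL eps by (intro order_tendstoD(2)) auto
    have e2: "\<epsilon>/2 > 0" using eps by simp
    from dw[OF s] obtain d where d: "d > 0"
      and dd: "\<And>z. z \<in> {0..} \<Longrightarrow> norm (z - s) < d \<Longrightarrow> norm (w z - w s - (z - s) *\<^sub>R b) \<le> \<epsilon>/2 * norm (z - s)"
      unfolding has_vector_derivative_def has_derivative_within_alt b_def using e2 by blast
    have ev2: "eventually (\<lambda>h. 0 < h \<and> h < d) (at_right (0::real))"
      using d unfolding eventually_at_right_field by auto
    show "eventually (\<lambda>h. \<phi> (s+h) \<le> \<phi> s + h * (lam * \<phi> s + \<epsilon>)) (at_right 0)"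
      using ev1 ev2
    proof eventually_elim
      case (elim h)
      have h0: "h > 0" using elim by simp
      have r: "norm (w (s+h) - a - h *\<^sub>R b) \<le> \<epsilon>/2 * h"
        using dd[of "s+h"] elim s unfolding a_def by simp
      have "norm (a + h *\<^sub>R b) = norm a + h * q h" using h0 by (simp add: q_def)
      also have "\<dots> \<le> norm a + h * (L + \<epsilon>/2)" using elim h0 by simp
      finally have n1: "norm (a + h *\<^sub>R b) \<le> norm a + h * (L + \<epsilon>/2)" .
      have "\<phi> (s+h) \<le> norm (a + h *\<^sub>R b) + norm (w (s+h) - a - h *\<^sub>R b)"
        unfolding \<phi>_def by (metis add.commute diff_add_cancel diff_diff_eq norm_triangle_ineq)
      also have "\<dots> \<le> norm a + h * (L + \<epsilon>/2) + \<epsilon>/2 * h" using n1 r by simp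
      also have "\<dots> \<le> norm a + h * (lam * norm a + \<epsilon>)"
        using Lb h0 by (simp add: algebra_simps mult_left_mono)
      finally show ?case by (simp add: \<phi>_def a_def)
    qed
  qed
  thus ?thesis by (simp add: \<phi>_def w_def)
qed




primrec resid :: "(nat \<Rightarrow> 'w \<Rightarrow> 'v) \<Rightarrow> ('v \<Rightarrow> 'w::real_normed_vector) \<Rightarrow> 'w \<Rightarrow> nat \<Rightarrow> 'w" where
  "resid g \<Theta> y 0 = y"
| "resid g \<Theta> y (Suc n) = resid g \<Theta> y n - \<Theta> (g n (resid g \<Theta> y n))"

lemma baire_step:
  fixes \<Theta> :: "'v::real_normed_vector \<Rightarrow> 'w::banach"
  assumes surj: "surj \<Theta>"
  shows "\<exists>n::nat. \<exists>w0 \<epsilon>. \<epsilon> > 0 \<and> ball w0 \<epsilon> \<subseteq> closure (\<Theta> ` cball 0 (real n + 1))"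
proof (rule ccontr)
  assume nex: "\<not> ?thesis"
  define G where "G = range (\<lambda>n::nat. closure (\<Theta> ` cball 0 (real n + 1)))"
  have "euclidean interior_of \<Union>G = {}"
  proof (rule Baire_category_alt)
    show "completely_metrizable_space (euclidean::'w topology) \<or> locally_compact_space (euclidean::'w topology) \<and> regular_space (euclidean::'w topology)"
      using completely_metrizable_space_euclidean by blast
    show "countable G" unfolding G_def by simp
    fix T assume "T \<in> G"
    then obtain n where T: "T = closure (\<Theta> ` cball 0 (real n + 1))" unfolding G_def by auto
    show "closedin euclidean T \<and> euclidean interior_of T = {}"
    proof
      show "closedin euclidean T" unfolding T closed_closedin[symmetric] by simp
      show "euclidean interior_of T = {}"
      proof (rule ccontr)
        assume "euclidean interior_of T \<noteq> {}"
        then obtain w0 where "w0 \<in> interior T" by auto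
        then obtain e where "e > 0" "ball w0 e \<subseteq> T" using mem_interior by blast
        thus False using nex T by blast
      qed
    qed
  qed
  moreover have "\<Union>G = UNIV"
  proof -
    have "w \<in> \<Union>G" for w
    proof -
      obtain x where x: "w = \<Theta> x" using surj by (metis surjD)
      obtain n :: nat where "norm x \<le> real n" using real_arch_simple by blast
      hence "x \<in> cball 0 (real n + 1)" by simp
      hence "w \<in> closure (\<Theta> ` cball 0 (real n + 1))" using x closure_subset by blast
      thus ?thesis unfolding G_def by blast
    qed
    thus ?thesis by blast
  qed
  ultimately show False by simp
qed

lemma bounded_inverse:
  fixes \<Theta> :: "'v::banach \<Rightarrow> 'w::banach"
  assumes lin: "bounded_linear \<Theta>" and bij: "bij \<Theta>"
  shows "\<exists>C>0. \<forall>x. norm x \<le> C * norm (\<Theta> x)"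
proof -
  interpret L: bounded_linear \<Theta> by (rule lin)
  have inj: "inj \<Theta>" and surj: "surj \<Theta>" using bij by (auto simp: bij_def)
  obtain n :: nat and w0 \<epsilon> where eps: "\<epsilon> > 0" and ball: "ball w0 \<epsilon> \<subseteq> closure (\<Theta> ` cball 0 (real n + 1))"
    using baire_step[OF surj] by blast
  define N where "N = real n + 1"
  have N: "N > 0" by (simp add: N_def)
  have approx: "\<exists>x. norm x \<le> N \<and> norm (z - \<Theta> x) < e" if zb: "z \<in> ball w0 \<epsilon>" and ep: "e > 0" for z e
  proof -
    have "z \<in> closure (\<Theta> ` cball 0 N)" using ball zb N_def by auto
    then obtain y where "y \<in> \<Theta> ` cball 0 N" "dist y z < e" using ep closure_approachable by blast
    thus ?thesis by (auto simp: dist_norm norm_minus_commute)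
  qed
  define \<delta> where "\<delta> = \<epsilon> / (2 * N)"
  have \<delta>: "\<delta> > 0" using eps N by (simp add: \<delta>_def)
  have P: "\<exists>x. norm x \<le> 1 \<and> norm (y - \<Theta> x) < e" if "norm y < \<delta>" "e > 0" for y e
  proof -
    define y' where "y' = (2*N) *\<^sub>R y"
    have "norm y' < \<epsilon>" using that N by (simp add: y'_def \<delta>_def field_simps)
    hence "w0 + y' \<in> ball w0 \<epsilon>" by (simp add: dist_norm)
    moreover have "w0 \<in> ball w0 \<epsilon>" using eps by simp
    moreover have "e * N > 0" using that N by simp
    ultimately obtain x1 x2 where x1: "norm x1 \<le> N" "norm (w0 + y' - \<Theta> x1) < e * N"
      and x2: "norm x2 \<le> N" "norm (w0 - \<Theta> x2) < e * N" using approx by metis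
    define x where "x = (1/(2*N)) *\<^sub>R (x1 - x2)"
    have "norm (x1 - x2) \<le> 2 * N" using x1 x2 norm_triangle_ineq4[of x1 x2] by simp
    moreover have "norm x = norm (x1 - x2) / (2*N)" using N unfolding x_def norm_scaleR by simp
    moreover have "norm (x1 - x2) / (2*N) \<le> 1" using N calculation(1) by (simp add: divide_le_eq)
    ultimately have nx: "norm x \<le> 1" by linarith
    have eq: "y - \<Theta> x = (1/(2*N)) *\<^sub>R ((w0 + y' - \<Theta> x1) - (w0 - \<Theta> x2))"
      using N by (simp add: x_def y'_def L.scaleR L.diff algebra_simps)
    have "norm ((w0 + y' - \<Theta> x1) - (w0 - \<Theta> x2)) < 2 * (e * N)"
      using x1 x2 norm_triangle_ineq4[of "w0 + y' - \<Theta> x1" "w0 - \<Theta> x2"] by simp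
    moreover have "norm (y - \<Theta> x) = norm ((w0 + y' - \<Theta> x1) - (w0 - \<Theta> x2)) / (2*N)"
      unfolding eq norm_scaleR using N by simp
    ultimately have "norm (y - \<Theta> x) < e" using N by (simp add: divide_less_eq mult_ac)
    thus ?thesis using nx by blast
  qed
  have Pr: "\<exists>x. norm x \<le> r \<and> norm (y - \<Theta> x) < e" if "r > 0" "norm y < \<delta> * r" "e > 0" for y e r
  proof -
    have "norm ((1/r) *\<^sub>R y) < \<delta>" using that by (simp add: field_simps)
    moreover have "e / r > 0" using that by simp
    ultimately obtain x where x: "norm x \<le> 1" "norm ((1/r) *\<^sub>R y - \<Theta> x) < e / r" using P by blast
    have "y - \<Theta> (r *\<^sub>R x) = r *\<^sub>R ((1/r) *\<^sub>R y - \<Theta> x)" using that by (simp add: L.scaleR algebra_simps)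
    hence "norm (y - \<Theta> (r *\<^sub>R x)) = r * norm ((1/r) *\<^sub>R y - \<Theta> x)" using that by simp
    moreover have "r * norm ((1/r) *\<^sub>R y - \<Theta> x) < e" using x(2) that by (simp add: field_simps)
    ultimately have "norm (y - \<Theta> (r *\<^sub>R x)) < e" by simp
    moreover have "norm (r *\<^sub>R x) \<le> r" using x that by (simp add: mult_left_le)
    ultimately show ?thesis by blast
  qed
  have "\<forall>m z. \<exists>x. norm z < \<delta> / 2^m \<longrightarrow> norm x \<le> 1/2^m \<and> norm (z - \<Theta> x) < \<delta> / 2^(Suc m)"
  proof (intro allI)
    fix m z
    show "\<exists>x. norm z < \<delta> / 2^m \<longrightarrow> norm x \<le> 1/2^m \<and> norm (z - \<Theta> x) < \<delta> / 2^(Suc m)"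
    proof (cases "norm z < \<delta> / 2^m")
      case True
      then obtain x where "norm x \<le> 1/2^m" "norm (z - \<Theta> x) < \<delta> / 2^(Suc m)"
        using Pr[of "1/2^m" z "\<delta> / 2^(Suc m)"] \<delta> by auto
      thus ?thesis by blast
    qed simp
  qed
  then obtain g where g: "\<And>m z. norm z < \<delta> / 2^m \<Longrightarrow> norm (g m z) \<le> 1/2^m \<and> norm (z - \<Theta> (g m z)) < \<delta> / 2^(Suc m)"
    by metis
  have solve: "\<exists>X. norm X \<le> 2 \<and> \<Theta> X = y" if y: "norm y < \<delta>" for y
  proof -
    define r where "r = resid g \<Theta> y"
    define xs where "xs m = g m (r m)" for m
    have rb: "norm (r m) < \<delta> / 2^m" for m
      by (induction m) (use y g in \<open>auto simp: r_def\<close>)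
    have xb: "norm (xs m) \<le> (1/2)^m" for m using g[OF rb[of m]] by (simp add: xs_def power_one_over)
    have rs: "r m = y - \<Theta> (\<Sum>i<m. xs i)" for m
      by (induction m) (simp_all add: r_def xs_def L.add L.diff L.zero algebra_simps)
    have sg: "summable (\<lambda>m. (1/2::real)^m)" by (rule summable_geometric) simp
    have sx: "summable xs" by (rule summable_comparison_test[OF _ sg]) (use xb in auto)
    have snx: "summable (\<lambda>m. norm (xs m))" by (rule summable_comparison_test[OF _ sg]) (use xb in auto)
    define X where "X = suminf xs"
    have "norm X \<le> (\<Sum>m. norm (xs m))" unfolding X_def by (rule summable_norm[OF snx])
    also have "\<dots> \<le> (\<Sum>m. (1/2::real)^m)" by (rule suminf_le[OF xb snx sg])
    also have "\<dots> = 2" by (simp add: suminf_geometric)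
    finally have nX: "norm X \<le> 2" .
    have l1: "(\<lambda>m. \<Theta> (\<Sum>i<m. xs i)) \<longlonglongrightarrow> \<Theta> X"
      unfolding X_def by (intro L.tendsto summable_LIMSEQ sx)
    have r0: "r \<longlonglongrightarrow> 0"
    proof -
      have "(\<lambda>m. \<delta> * (1/2)^m) \<longlonglongrightarrow> \<delta> * 0"
        by (intro tendsto_intros) simp
      hence "(\<lambda>m. \<delta> / 2^m) \<longlonglongrightarrow> 0" by (simp add: power_one_over field_simps)
      moreover have "\<forall>\<^sub>F m in sequentially. norm (r m) \<le> \<delta> / 2^m"
        using rb by (simp add: less_imp_le)
      ultimately show ?thesis by (rule Lim_null_comparison[rotated])
    qed
    have "(\<lambda>m. \<Theta> (\<Sum>i<m. xs i)) = (\<lambda>m. y - r m)" using rs by (simp add: fun_eq_iff)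
    hence "(\<lambda>m. \<Theta> (\<Sum>i<m. xs i)) \<longlonglongrightarrow> y - 0" using tendsto_diff[OF tendsto_const[of y] r0] by simp
    hence "\<Theta> X = y" using l1 LIMSEQ_unique by force
    thus ?thesis using nX by blast
  qed
  show ?thesis
  proof (intro exI[of _ "4/\<delta>"] conjI allI)
    show "4/\<delta> > 0" using \<delta> by simp
    fix x
    show "norm x \<le> 4/\<delta> * norm (\<Theta> x)"
    proof (cases "x = 0")
      case True thus ?thesis by simp
    next
      case False
      hence "\<Theta> x \<noteq> 0" using inj L.zero by (metis injD)
      hence nt: "norm (\<Theta> x) > 0" by simp
      define c where "c = \<delta> / (2 * norm (\<Theta> x))"
      have c: "c > 0" using nt \<delta> by (simp add: c_def)
      have "norm (c *\<^sub>R \<Theta> x) = \<delta>/2" using nt \<delta> by (simp add: c_def)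
      hence "norm (c *\<^sub>R \<Theta> x) < \<delta>" using \<delta> by simp
      then obtain X where X: "norm X \<le> 2" "\<Theta> X = c *\<^sub>R \<Theta> x" using solve by blast
      hence "\<Theta> X = \<Theta> (c *\<^sub>R x)" by (simp add: L.scaleR)
      hence "X = c *\<^sub>R x" using inj by (simp add: inj_eq)
      hence "c * norm x \<le> 2" using X c by simp
      hence "norm x \<le> 2 / c" using c by (simp add: field_simps)
      thus ?thesis using nt \<delta> by (simp add: c_def field_simps)
    qed
  qed
qed




lemma shift_solution:
  fixes u :: "real \<Rightarrow> 'v::real_normed_vector"
  assumes ud: "\<And>t. t \<ge> 0 \<Longrightarrow> (u has_vector_derivative g t (u t)) (at t within {0..})"
    and c: "c \<ge> 0" and s: "s \<ge> 0"
  shows "((\<lambda>s. u (s + c)) has_vector_derivative g (s + c) (u (s + c))) (at s within {0..})"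
proof -
  have d1: "((\<lambda>s. s + c) has_vector_derivative 1) (at s within {0..})"
    by (auto intro!: derivative_eq_intros)
  have "(\<lambda>s. s + c) ` {0..} \<subseteq> {0..}" using c by auto
  hence d2: "(u has_vector_derivative g (s + c) (u (s + c))) (at (s + c) within (\<lambda>s. s + c) ` {0..})"
    using ud[of "s+c"] c s by (auto intro: has_vector_derivative_within_subset)
  show ?thesis using vector_diff_chain_within[OF d1 d2] by (simp add: o_def)
qed

theorem mainTheorem12:
  fixes T :: "'v::banach \<Rightarrow> 'v"
    and \<Theta> :: "'v \<Rightarrow> 'w::banach"
    and f :: "real \<Rightarrow> 'v \<Rightarrow> 'v"
    and k :: nat and \<Delta>t lam :: real
    and u :: "real \<Rightarrow> 'v"
  assumes T_lin: "bounded_linear T" and T_bij: "bij T"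
    and k_pos: "k \<ge> 1" and T_pow: "T ^^ k = id"
    and dt_pos: "\<Delta>t > 0"
    and f_equiv: "\<And>t x. t \<ge> 0 \<Longrightarrow> f t (T x) = T (f (t + \<Delta>t) x)"
    and Theta_lin: "bounded_linear \<Theta>" and Theta_bij: "bij \<Theta>"
    and lam_neg: "lam < 0"
    and M_bound: "\<And>t. t \<ge> 0 \<Longrightarrow> M_Theta \<Theta> (f t) \<le> ereal lam"
    and u_deriv: "\<And>t. t \<ge> 0 \<Longrightarrow> (u has_vector_derivative f t (u t)) (at t within {0..})"
    and u_C1: "continuous_on {0..} (\<lambda>t. f t (u t))"
  shows "\<exists>p :: real \<Rightarrow> 'v.
           (\<forall>t\<ge>0. p (t + real k * \<Delta>t) = p t)
         \<and> ((\<lambda>t. norm (u t - p t)) \<longlongrightarrow> 0) at_top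
         \<and> (\<forall>t\<ge>0. (\<lambda>n. u (t + real n * (real k * \<Delta>t))) \<longlonglongrightarrow> p t)"
proof -
  interpret L: bounded_linear \<Theta> by (rule Theta_lin)
  have injT: "inj \<Theta>" using Theta_bij by (simp add: bij_def)
  define P where "P = real k * \<Delta>t"
  have P: "P > 0" using k_pos dt_pos by (simp add: P_def)
  have feq: "f t ((T^^j) x) = (T^^j) (f (t + real j * \<Delta>t) x)" if "t \<ge> 0" for j t x
    using that
  proof (induction j arbitrary: t)
    case 0 thus ?case by simp
  next
    case (Suc j)
    have "f t ((T^^Suc j) x) = T (f (t + \<Delta>t) ((T^^j) x))" using f_equiv Suc.prems by simp
    also have "\<dots> = T ((T^^j) (f (t + \<Delta>t + real j * \<Delta>t) x))"
      using Suc.IH[of "t + \<Delta>t"] Suc.prems dt_pos by simp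
    also have "\<dots> = (T^^Suc j) (f (t + real (Suc j) * \<Delta>t) x)" by (simp add: algebra_simps)
    finally show ?case .
  qed
  have fper: "f t x = f (t + P) x" if "t \<ge> 0" for t x
    using feq[OF that, of k x] T_pow by (simp add: P_def)
  have fperN: "f t x = f (t + real n * P) x" if "t \<ge> 0" for t x n
  proof (induction n)
    case 0 thus ?case by simp
  next
    case (Suc n)
    have "f (t + real n * P) x = f (t + real n * P + P) x" using fper[of "t + real n * P"] that P by simp
    thus ?case using Suc by (simp add: algebra_simps)
  qed
  have solN: "((\<lambda>s. u (s + real n * P)) has_vector_derivative f s (u (s + real n * P))) (at s within {0..})"
    if "s \<ge> 0" for s n
    using shift_solution[of u f "real n * P" s, OF u_deriv] that P fperN[OF that, of "u (s + real n * P)" n]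
    by simp
  have sol0: "(u has_vector_derivative f s (u s)) (at s within {0..})" if "s \<ge> 0" for s
    using u_deriv that .
  have sol1: "((\<lambda>s. u (s + P)) has_vector_derivative f s (u (s + P))) (at s within {0..})" if "s \<ge> 0" for s
    using solN[OF that, of 1] by simp
  define D where "D = norm (\<Theta> (u 0 - u (0 + P)))"
  have contr: "norm (\<Theta> (u \<tau> - u (\<tau> + P))) \<le> exp (lam * \<tau>) * D" if "\<tau> \<ge> 0" for \<tau>
    unfolding D_def
    by (rule contraction[where x=u and y="\<lambda>s. u (s + P)", OF Theta_lin injT M_bound sol0 sol1 that])
  obtain C where C: "C > 0" "\<And>x. norm x \<le> C * norm (\<Theta> x)"
    using bounded_inverse[OF Theta_lin Theta_bij] by blast
  define \<rho> where "\<rho> = exp (lam * P)"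
  have \<rho>: "0 < \<rho>" "\<rho> < 1" using lam_neg P by (auto simp: \<rho>_def mult_neg_pos)
  have D0: "D \<ge> 0" by (simp add: D_def)
  define d where "d t i = u (t + real (Suc i) * P) - u (t + real i * P)" for t i
  have db: "norm (d t i) \<le> (C * D * exp (lam * t)) * \<rho>^i" if "t \<ge> 0" for t i
  proof -
    have "norm (d t i) = norm (u (t + real i * P) - u (t + real i * P + P))"
      by (simp add: d_def norm_minus_commute algebra_simps)
    also have "\<dots> \<le> C * norm (\<Theta> (u (t + real i * P) - u (t + real i * P + P)))" by (rule C(2))
    also have "\<dots> \<le> C * (exp (lam * (t + real i * P)) * D)"
      using contr[of "t + real i * P"] that P C by (intro mult_left_mono) auto
    also have "exp (lam * (t + real i * P)) = exp (lam * t) * \<rho>^i"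
      by (simp add: \<rho>_def distrib_left exp_add exp_of_nat_mult[symmetric] mult_ac)
    finally show ?thesis by (simp add: mult_ac)
  qed
  have sg: "summable (\<lambda>i. (C * D * exp (lam * t)) * \<rho>^i)" for t
    using \<rho> by (intro summable_mult summable_geometric) simp
  have sd: "summable (d t)" if "t \<ge> 0" for t
    by (rule summable_comparison_test[OF _ sg]) (use db that in auto)
  have snd: "summable (\<lambda>i. norm (d t i))" if "t \<ge> 0" for t
    by (rule summable_comparison_test[OF _ sg]) (use db that in auto)
  define p where "p t = u t + suminf (d t)" for t
  have tel: "u (t + real n * P) = u t + (\<Sum>i<n. d t i)" for t n
    using sum_lessThan_telescope[of "\<lambda>i. u (t + real i * P)" n] by (simp add: d_def)
  have lim: "(\<lambda>n. u (t + real n * P)) \<longlonglongrightarrow> p t" if "t \<ge> 0" for t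
    unfolding tel p_def by (intro tendsto_add tendsto_const summable_LIMSEQ sd that)
  have per: "p (t + P) = p t" if "t \<ge> 0" for t
  proof -
    have "(\<lambda>n. u (t + real (Suc n) * P)) \<longlonglongrightarrow> p t" using LIMSEQ_Suc[OF lim[OF that]] .
    moreover have "(\<lambda>n. u (t + real (Suc n) * P)) = (\<lambda>n. u ((t + P) + real n * P))"
      by (simp add: algebra_simps)
    ultimately have "(\<lambda>n. u ((t + P) + real n * P)) \<longlonglongrightarrow> p t" by simp
    moreover have "(\<lambda>n. u ((t + P) + real n * P)) \<longlonglongrightarrow> p (t + P)" using lim[of "t+P"] that P by simp
    ultimately show ?thesis using LIMSEQ_unique by blast
  qed
  define B where "B = C * D / (1 - \<rho>)"
  have bnd: "norm (u t - p t) \<le> B * exp (lam * t)" if "t \<ge> 0" for t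
  proof -
    have "norm (u t - p t) = norm (suminf (d t))" by (simp add: p_def)
    also have "\<dots> \<le> (\<Sum>i. norm (d t i))" by (rule summable_norm[OF snd[OF that]])
    also have "\<dots> \<le> (\<Sum>i. (C * D * exp (lam * t)) * \<rho>^i)"
      by (rule suminf_le[OF _ snd[OF that] sg]) (use db that in auto)
    also have "\<dots> = (C * D * exp (lam * t)) * (1 / (1 - \<rho>))"
      using \<rho> by (simp add: suminf_mult suminf_geometric)
    also have "\<dots> = B * exp (lam * t)" by (simp add: B_def)
    finally show ?thesis .
  qed
  have e0: "((\<lambda>t. exp (lam * t)) \<longlongrightarrow> 0) at_top"
  proof -
    have "filterlim (\<lambda>t. lam * t) at_bot at_top"
      by (rule filterlim_tendsto_neg_mult_at_bot[OF tendsto_const lam_neg filterlim_ident])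
    thus ?thesis using exp_at_bot by (rule filterlim_compose[of exp, unfolded o_def, rotated])
  qed
  have conv: "((\<lambda>t. norm (u t - p t)) \<longlongrightarrow> 0) at_top"
  proof (rule tendsto_sandwich[of "\<lambda>_. 0" _ _ "\<lambda>t. B * exp (lam * t)"])
    show "eventually (\<lambda>t. 0 \<le> norm (u t - p t)) at_top" by simp
    show "eventually (\<lambda>t. norm (u t - p t) \<le> B * exp (lam * t)) at_top"
      using eventually_ge_at_top[of "0::real"] by (rule eventually_mono) (rule bnd)
    show "((\<lambda>t. B * exp (lam * t)) \<longlongrightarrow> 0) at_top" using tendsto_mult_right_zero[OF e0] by simp
  qed simp
  show ?thesis
    by (intro exI[of _ p] conjI allI impI conv) (use per lim in \<open>simp_all add: P_def\<close>)
qed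


end
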